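(* Let $X$ be a compact space and $\mathcal{A}$ a dense subspace of $C(X)$ (real continuous functions, supremum norm) containing the constant functions and closed under finite lattice operations. Let $L$ be a Lip-norm on $\mathcal{A}$ such that $L(f\vee g)\le L(f)\vee L(g)$ for all $f,g\in\mathcal{A}$. Then $L$ is the restriction to $\mathcal{A}$ of the ordinary Lipschitz seminorm on $C(X)$ corresponding to the metric $\rho_L$ on $X$, i.e. $L(f)=\sup\{|f(x)-f(y)|/\rho_L(\delta_x,\delta_y):x,y\in X,\ x\ne y\}$ for all $f\in\mathcal{A}$.
   Context: $\mathcal{A}$ is an order-unit space with order unit $1$; its states are the continuous linear functionals $\mu$ with $\mu(1)=1=\|\mu\|$, and $\delta_x$ denotes evaluation at $x$. $\rho_L(\mu,\nu)=\sup\{|\mu(f)-\nu(f)|:f\in\mathcal{A},L(f)\le1\}$. A Lip-norm on $\mathcal{A}$ is a finite-valued seminorm $L$ with: (1) $L(f)=0$ iff $f$ is constant; (2) $\{f\in\mathcal{A}:L(f)\le1\}$ is norm-closed in $\mathcal{A}$; (3) the image of $\{f:L(f)\le1\}$ in $\mathcal{A}/\mathbb{R}1$ is totally bounded for the quotient norm. $f\vee g$ is the pointwise maximum. *)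

theory Defs
  imports "HOL-Analysis.Analysis"
begin

text \<open>Functions on the compact space are represented as total functions \<open>'a \<Rightarrow> real\<close>
  on the carrier type; \<open>C(X)\<close> is the set of continuous ones with the supremum norm.\<close>

definition supnorm :: "('a \<Rightarrow> real) \<Rightarrow> real" where
  "supnorm f = (SUP x. \<bar>f x\<bar>)"

text \<open>Quotient norm on \<open>A / \<real>1\<close>: distance to the constants.\<close>
definition quot_norm :: "('a \<Rightarrow> real) \<Rightarrow> real" where
  "quot_norm f = (INF c. supnorm (\<lambda>x. f x - c))"

definition seminorm_on :: "('a \<Rightarrow> real) set \<Rightarrow> (('a \<Rightarrow> real) \<Rightarrow> real) \<Rightarrow> bool" where
  "seminorm_on A L \<longleftrightarrow>
     (\<forall>f\<in>A. 0 \<le> L f) \<and>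
     (\<forall>f\<in>A. \<forall>c::real. L (\<lambda>x. c * f x) = \<bar>c\<bar> * L f) \<and>
     (\<forall>f\<in>A. \<forall>g\<in>A. L (\<lambda>x. f x + g x) \<le> L f + L g)"

definition lip_norm :: "('a \<Rightarrow> real) set \<Rightarrow> (('a \<Rightarrow> real) \<Rightarrow> real) \<Rightarrow> bool" where
  "lip_norm A L \<longleftrightarrow>
     seminorm_on A L \<and>
     (\<forall>f\<in>A. L f = 0 \<longleftrightarrow> (\<exists>c. f = (\<lambda>x. c))) \<and>
     (\<forall>f\<in>A. (\<forall>e>0. \<exists>g\<in>A. L g \<le> 1 \<and> supnorm (\<lambda>x. f x - g x) < e) \<longrightarrow> L f \<le> 1) \<and>
     (\<forall>e>0. \<exists>F. finite F \<and> F \<subseteq> A \<and>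
        (\<forall>f\<in>A. L f \<le> 1 \<longrightarrow> (\<exists>g\<in>F. quot_norm (\<lambda>x. f x - g x) < e)))"

definition delta :: "'a \<Rightarrow> ('a \<Rightarrow> real) \<Rightarrow> real" where
  "delta x = (\<lambda>f. f x)"

definition rhoL :: "('a \<Rightarrow> real) set \<Rightarrow> (('a \<Rightarrow> real) \<Rightarrow> real)
                   \<Rightarrow> (('a \<Rightarrow> real) \<Rightarrow> real) \<Rightarrow> (('a \<Rightarrow> real) \<Rightarrow> real) \<Rightarrow> real" where
  "rhoL A L \<mu> \<nu> = Sup {\<bar>\<mu> f - \<nu> f\<bar> | f. f \<in> A \<and> L f \<le> 1}"

text \<open>Ordinary Lipschitz seminorm for a metric \<open>d\<close> on points (with the convention
  \<open>sup \<emptyset> = 0\<close>, which is harmless since all quotients are nonnegative).\<close>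
definition lip_seminorm :: "('a \<Rightarrow> 'a \<Rightarrow> real) \<Rightarrow> ('a \<Rightarrow> real) \<Rightarrow> real" where
  "lip_seminorm d f = Sup (insert 0 {\<bar>f x - f y\<bar> / d x y | x y. x \<noteq> y})"

end

theory Submission
  imports Defs
begin


locale lctx =
  fixes A :: "('a::topological_space \<Rightarrow> real) set" and L :: "('a \<Rightarrow> real) \<Rightarrow> real"
  assumes compact_X: "compact (UNIV :: 'a set)"
    and A_cont: "\<forall>f\<in>A. continuous_on UNIV f"
    and A_add: "\<forall>f\<in>A. \<forall>g\<in>A. (\<lambda>x. f x + g x) \<in> A"
    and A_scale: "\<forall>f\<in>A. \<forall>c::real. (\<lambda>x. c * f x) \<in> A"
    and A_const: "\<forall>c::real. (\<lambda>x. c) \<in> A"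
    and A_max: "\<forall>f\<in>A. \<forall>g\<in>A. (\<lambda>x. max (f x) (g x)) \<in> A"
    and L_lip: "lip_norm A L"
    and L_max: "\<forall>f\<in>A. \<forall>g\<in>A. L (\<lambda>x. max (f x) (g x)) \<le> max (L f) (L g)"
begin

lemma L_nonneg: "f \<in> A \<Longrightarrow> 0 \<le> L f"
  using L_lip unfolding lip_norm_def seminorm_on_def by blast

lemma L_scale: "f \<in> A \<Longrightarrow> L (\<lambda>x. c * f x) = \<bar>c\<bar> * L f"
  using L_lip unfolding lip_norm_def seminorm_on_def by blast

lemma L_add: "f \<in> A \<Longrightarrow> g \<in> A \<Longrightarrow> L (\<lambda>x. f x + g x) \<le> L f + L g"
  using L_lip unfolding lip_norm_def seminorm_on_def by blast

lemma L_zero_iff: "f \<in> A \<Longrightarrow> L f = 0 \<longleftrightarrow> (\<exists>c. f = (\<lambda>x. c))"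
  using L_lip unfolding lip_norm_def by blast

lemma L_const: "L (\<lambda>x. c) = 0"
  using L_zero_iff A_const by blast

lemma L_closed: "f \<in> A \<Longrightarrow> (\<forall>e>0. \<exists>g\<in>A. L g \<le> 1 \<and> supnorm (\<lambda>x. f x - g x) < e) \<Longrightarrow> L f \<le> 1"
  using L_lip unfolding lip_norm_def by blast

lemma L_tb: "\<exists>F. finite F \<and> F \<subseteq> A \<and>
        (\<forall>f\<in>A. L f \<le> 1 \<longrightarrow> (\<exists>g\<in>F. quot_norm (\<lambda>x. f x - g x) < 1))"
  using L_lip unfolding lip_norm_def by (meson zero_less_one)

lemma neg_A: "f \<in> A \<Longrightarrow> (\<lambda>x. - f x) \<in> A"
  using A_scale[rule_format, of f "-1"] by simp

lemma L_neg: "f \<in> A \<Longrightarrow> L (\<lambda>x. - f x) = L f"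
  using L_scale[of f "-1"] by simp

lemma min_A: "f \<in> A \<Longrightarrow> g \<in> A \<Longrightarrow> (\<lambda>x. min (f x) (g x)) \<in> A \<and> L (\<lambda>x. min (f x) (g x)) \<le> max (L f) (L g)"
proof -
  assume f: "f \<in> A" and g: "g \<in> A"
  have e: "(\<lambda>x. min (f x) (g x)) = (\<lambda>x. - max (- f x) (- g x))"
    by (simp add: fun_eq_iff min_def max_def)
  have m: "(\<lambda>x. max (- f x) (- g x)) \<in> A" by (rule A_max[rule_format, OF neg_A[OF f] neg_A[OF g]])
  have "L (\<lambda>x. max (- f x) (- g x)) \<le> max (L f) (L g)"
  proof -
    have "L (\<lambda>x. max (- f x) (- g x)) \<le> max (L (\<lambda>x. - f x)) (L (\<lambda>x. - g x))"
      by (rule L_max[rule_format, OF neg_A[OF f] neg_A[OF g]])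
    then show ?thesis using L_neg[OF f] L_neg[OF g] by simp
  qed
  then show ?thesis unfolding e using neg_A[OF m] L_neg[OF m] by simp
qed

lemma add_const_A: "f \<in> A \<Longrightarrow> (\<lambda>x. f x + c) \<in> A \<and> L (\<lambda>x. f x + c) \<le> L f"
  using A_add A_const L_add[of f "\<lambda>x. c"] L_const by auto

lemma cont_bounded: "continuous_on UNIV (u::'a\<Rightarrow>real) \<Longrightarrow> bdd_above (range (\<lambda>z. \<bar>u z\<bar>))"
proof -
  assume "continuous_on UNIV u"
  then have "compact (range u)" using compact_continuous_image compact_X by blast
  then obtain B where "\<forall>y\<in>range u. norm y \<le> B" using compact_imp_bounded bounded_iff by blast
  then show ?thesis by (auto simp: bdd_above_def)
qed

definition S :: "'a \<Rightarrow> 'a \<Rightarrow> real set" where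
  "S x y = {\<bar>g x - g y\<bar> | g. g \<in> A \<and> L g \<le> 1}"

lemma S_ne: "0 \<in> S x y"
  unfolding S_def mem_Collect_eq
  by (rule exI[of _ "\<lambda>z. 0"]) (simp add: L_const A_const)

lemma sup_le: "continuous_on UNIV (u::'a \<Rightarrow> real) \<Longrightarrow> \<bar>u z\<bar> \<le> supnorm u"
proof -
  assume "continuous_on UNIV u"
  then have "bdd_above (range (\<lambda>z. \<bar>u z\<bar>))" by (rule cont_bounded)
  then show ?thesis unfolding supnorm_def by (rule cSUP_upper[OF UNIV_I])
qed

lemma S_bdd: "bdd_above (S x y)"
proof -
  obtain F where F: "finite F" "F \<subseteq> A"
    "\<forall>f\<in>A. L f \<le> 1 \<longrightarrow> (\<exists>g\<in>F. quot_norm (\<lambda>x. f x - g x) < 1)"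
    using L_tb by blast
  have "s \<le> (\<Sum>g\<in>F. \<bar>g x - g y\<bar>) + 2" if "s \<in> S x y" for s
  proof -
    obtain f where f: "f \<in> A" "L f \<le> 1" "s = \<bar>f x - f y\<bar>" using \<open>s \<in> S x y\<close> unfolding S_def by blast
    obtain g where g: "g \<in> F" "quot_norm (\<lambda>x. f x - g x) < 1" using F f by blast
    obtain c where c: "supnorm (\<lambda>z. f z - g z - c) < 1"
      using cInf_lessD[of "range (\<lambda>c. supnorm (\<lambda>z. f z - g z - c))" 1] g(2)
      unfolding quot_norm_def by auto
    have gA: "g \<in> A" using g F by blast
    have "continuous_on UNIV (\<lambda>z. f z - g z - c)"
      using A_cont f gA by (intro continuous_intros) auto
    then have "\<bar>f x - g x - c\<bar> < 1" "\<bar>f y - g y - c\<bar> < 1"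
      using sup_le[of "\<lambda>z. f z - g z - c"] c by (meson le_less_trans)+
    then have "s < \<bar>g x - g y\<bar> + 2" using f(3) by linarith
    moreover have "\<bar>g x - g y\<bar> \<le> (\<Sum>g\<in>F. \<bar>g x - g y\<bar>)"
      using member_le_sum[OF g(1), of "\<lambda>g. \<bar>g x - g y\<bar>"] F(1) by simp
    ultimately show ?thesis by linarith
  qed
  then show ?thesis by (auto simp: bdd_above_def)
qed

lemma rho_eq: "rhoL A L (delta x) (delta y) = Sup (S x y)"
  unfolding rhoL_def S_def delta_def by simp

lemma rho_nonneg: "0 \<le> Sup (S x y)"
  using S_ne S_bdd by (simp add: cSup_upper)

lemma lip_bound: "f \<in> A \<Longrightarrow> \<bar>f x - f y\<bar> \<le> L f * Sup (S x y)"
proof -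
  assume f: "f \<in> A"
  show ?thesis
  proof (cases "L f = 0")
    case True
    then obtain c where "f = (\<lambda>x. c)" using L_zero_iff f by blast
    then show ?thesis using rho_nonneg L_const by simp
  next
    case False
    then have p: "L f > 0" using L_nonneg[OF f] by linarith
    define g where "g = (\<lambda>z. (1 / L f) * f z)"
    have "g \<in> A" using A_scale f g_def by blast
    moreover have "L g \<le> 1" using L_scale[OF f, of "1 / L f"] p g_def by simp
    ultimately have "\<bar>g x - g y\<bar> \<in> S x y" unfolding S_def by blast
    then have "\<bar>g x - g y\<bar> \<le> Sup (S x y)" using S_bdd by (simp add: cSup_upper)
    moreover have "\<bar>g x - g y\<bar> = \<bar>f x - f y\<bar> / L f"
      using p unfolding g_def by (simp add: diff_divide_distrib[symmetric])
    ultimately show ?thesis using p by (simp add: divide_le_eq mult.commute)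
  qed
qed

lemma lip_le_L: "f \<in> A \<Longrightarrow> lip_seminorm (\<lambda>x y. rhoL A L (delta x) (delta y)) f \<le> L f"
  and lip_bdd: "f \<in> A \<Longrightarrow> bdd_above (insert 0 {\<bar>f x - f y\<bar> / rhoL A L (delta x) (delta y) | x y. x \<noteq> y})"
proof -
  assume f: "f \<in> A"
  have *: "s \<le> L f" if "s \<in> insert 0 {\<bar>f x - f y\<bar> / rhoL A L (delta x) (delta y) | x y. x \<noteq> y}" for s
  proof -
    { fix x y
      have "\<bar>f x - f y\<bar> / Sup (S x y) \<le> L f"
      proof (cases "Sup (S x y) = 0")
        case True then show ?thesis using L_nonneg f by simp
      next
        case False then have "Sup (S x y) > 0" using rho_nonneg by (simp add: less_le)
        then show ?thesis using lip_bound[OF f, of x y] by (simp add: divide_le_eq)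
      qed }
    then show ?thesis using that L_nonneg f unfolding rho_eq by auto
  qed
  show "lip_seminorm (\<lambda>x y. rhoL A L (delta x) (delta y)) f \<le> L f"
    unfolding lip_seminorm_def by (rule cSup_least) (use * in auto)
  show "bdd_above (insert 0 {\<bar>f x - f y\<bar> / rhoL A L (delta x) (delta y) | x y. x \<noteq> y})"
    using * by (auto simp: bdd_above_def)
qed

lemma M_nonneg: "f \<in> A \<Longrightarrow> 0 \<le> lip_seminorm (\<lambda>x y. rhoL A L (delta x) (delta y)) f"
  unfolding lip_seminorm_def by (rule cSup_upper[OF insertI1 lip_bdd])

lemma interp:
  assumes f: "f \<in> A" and c: "lip_seminorm (\<lambda>x y. rhoL A L (delta x) (delta y)) f < c"
  shows "\<exists>h\<in>A. L h \<le> c \<and> h x = f x \<and> h y = f y"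
proof (cases "f x = f y")
  case True
  show ?thesis
  proof (rule bexI[of _ "\<lambda>z. f x"])
    show "(\<lambda>z. f x) \<in> A" using A_const by blast
    show "L (\<lambda>z. f x) \<le> c \<and> f x = f x \<and> f x = f y" using L_const M_nonneg[OF f] c True by simp
  qed
next
  case False
  let ?M = "lip_seminorm (\<lambda>x y. rhoL A L (delta x) (delta y)) f"
  have xy: "x \<noteq> y" using False by blast
  let ?r = "Sup (S x y)"
  have "?r \<noteq> 0"
  proof
    assume "?r = 0"
    with lip_bound[OF f, of x y] have "\<bar>f x - f y\<bar> \<le> 0" by simp
    with False show False by simp
  qed
  then have rpos: "?r > 0" using rho_nonneg by (simp add: less_le)
  have "\<bar>f x - f y\<bar> / rhoL A L (delta x) (delta y) \<in> {\<bar>f x - f y\<bar> / rhoL A L (delta x) (delta y) | x y. x \<noteq> y}"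
    using xy by blast
  then have "\<bar>f x - f y\<bar> / rhoL A L (delta x) (delta y) \<le> ?M"
    unfolding lip_seminorm_def by (rule cSup_upper[OF insertI2 lip_bdd[OF f]])
  then have "\<bar>f x - f y\<bar> / ?r \<le> ?M" by (simp only: rho_eq)
  then have "\<bar>f x - f y\<bar> \<le> ?M * ?r" using rpos by (simp add: divide_le_eq)
  also have "\<dots> < c * ?r" using c rpos by simp
  finally have lt: "\<bar>f x - f y\<bar> < c * ?r" .
  have cpos: "c > 0" using M_nonneg[OF f] c by linarith
  have "\<bar>f x - f y\<bar> < ?r * c" using lt by (simp only: mult.commute)
  then have "\<bar>f x - f y\<bar> / c < ?r" by (simp only: pos_divide_less_eq[OF cpos])
  moreover have ne: "S x y \<noteq> {}" using S_ne by blast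
  ultimately have "\<exists>s\<in>S x y. \<bar>f x - f y\<bar> / c < s"
    using less_cSup_iff[OF ne S_bdd] by blast
  then obtain s where "s \<in> S x y" "\<bar>f x - f y\<bar> / c < s" by blast
  then obtain g where g: "g \<in> A" "L g \<le> 1" "\<bar>f x - f y\<bar> / c < \<bar>g x - g y\<bar>"
    unfolding S_def by blast
  have "0 \<le> \<bar>f x - f y\<bar> / c" using cpos by simp
  then have gpos: "\<bar>g x - g y\<bar> > 0" using g(3) by linarith
  then have gne: "g x - g y \<noteq> 0" by simp
  define t where "t = (f x - f y) / (g x - g y)"
  have tg: "t * (g x - g y) = f x - f y" using gne t_def by simp
  have "\<bar>f x - f y\<bar> < \<bar>g x - g y\<bar> * c" using g(3) by (simp only: pos_divide_less_eq[OF cpos])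
  then have "\<bar>f x - f y\<bar> < c * \<bar>g x - g y\<bar>" by (subst mult.commute)
  then have "\<bar>f x - f y\<bar> / \<bar>g x - g y\<bar> < c" by (simp only: pos_divide_less_eq[OF gpos])
  then have tc: "\<bar>t\<bar> < c" unfolding t_def by (simp only: abs_divide)
  define h where "h = (\<lambda>z. t * g z + (f x - t * g x))"
  have tgA: "(\<lambda>z. t * g z) \<in> A" using A_scale g(1) by blast
  have "(\<lambda>z. t * g z + (f x - t * g x)) \<in> A \<and> L (\<lambda>z. t * g z + (f x - t * g x)) \<le> L (\<lambda>z. t * g z)"
    by (rule add_const_A[OF tgA])
  then have hA: "h \<in> A" and hL: "L h \<le> L (\<lambda>z. t * g z)" unfolding h_def by blast+
  note hL
  also have "\<dots> = \<bar>t\<bar> * L g" by (rule L_scale[OF g(1)])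
  also have "\<dots> \<le> \<bar>t\<bar>" using g(2) L_nonneg[OF g(1)] by (simp add: mult_left_le)
  finally have hc: "L h \<le> c" using tc by linarith
  have hx: "h x = f x" unfolding h_def by simp
  have "h y = f x - t * (g x - g y)" unfolding h_def by (simp add: right_diff_distrib)
  then have hy: "h y = f y" using tg by simp
  show ?thesis using hA hc hx hy by blast
qed

lemma fin_min: "finite I \<Longrightarrow> I \<noteq> {} \<Longrightarrow> (\<forall>i\<in>I. H i \<in> A \<and> L (H i) \<le> c) \<Longrightarrow>
   \<exists>k\<in>A. L k \<le> c \<and> (\<forall>z. k z = Min ((\<lambda>i. H i z) ` I))"
proof (induction I rule: finite_ne_induct)
  case (singleton x)
  then show ?case by auto
next
  case (insert x F)
  then obtain k where k: "k \<in> A" "L k \<le> c" "\<forall>z. k z = Min ((\<lambda>i. H i z) ` F)" by auto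
  have "H x \<in> A" "L (H x) \<le> c" using insert by auto
  then have hx: "H x \<in> A" "L (H x) \<le> c" by blast+
  have m: "(\<lambda>z. min (H x z) (k z)) \<in> A \<and> L (\<lambda>z. min (H x z) (k z)) \<le> max (L (H x)) (L k)"
    by (rule min_A[OF hx(1) k(1)])
  have "\<forall>z. min (H x z) (k z) = Min ((\<lambda>i. H i z) ` insert x F)"
    using k(3) insert(1,2) by simp
  moreover have "L (\<lambda>z. min (H x z) (k z)) \<le> c" using m hx(2) k(2) by linarith
  ultimately show ?case using m by blast
qed

lemma fin_max: "finite I \<Longrightarrow> I \<noteq> {} \<Longrightarrow> (\<forall>i\<in>I. H i \<in> A \<and> L (H i) \<le> c) \<Longrightarrow>
   \<exists>k\<in>A. L k \<le> c \<and> (\<forall>z. k z = Max ((\<lambda>i. H i z) ` I))"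
proof (induction I rule: finite_ne_induct)
  case (singleton x)
  then show ?case by auto
next
  case (insert x F)
  then obtain k where k: "k \<in> A" "L k \<le> c" "\<forall>z. k z = Max ((\<lambda>i. H i z) ` F)" by auto
  have "H x \<in> A" "L (H x) \<le> c" using insert by auto
  then have hx: "H x \<in> A" "L (H x) \<le> c" by blast+
  have m: "(\<lambda>z. max (H x z) (k z)) \<in> A" by (rule A_max[rule_format, OF hx(1) k(1)])
  have "L (\<lambda>z. max (H x z) (k z)) \<le> max (L (H x)) (L k)" by (rule L_max[rule_format, OF hx(1) k(1)])
  then have "L (\<lambda>z. max (H x z) (k z)) \<le> c" using hx(2) k(2) by linarith
  moreover have "\<forall>z. max (H x z) (k z) = Max ((\<lambda>i. H i z) ` insert x F)"
    using k(3) insert(1,2) by simp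
  ultimately show ?case using m by blast
qed

lemma step2:
  assumes f: "f \<in> A" and c: "lip_seminorm (\<lambda>x y. rhoL A L (delta x) (delta y)) f < c" and d: "\<delta> > 0"
  shows "\<exists>k\<in>A. L k \<le> c \<and> k x = f x \<and> (\<forall>z. k z < f z + \<delta>)"
proof -
  have "\<forall>y. \<exists>h. h \<in> A \<and> L h \<le> c \<and> h x = f x \<and> h y = f y"
  proof
    fix y show "\<exists>h. h \<in> A \<and> L h \<le> c \<and> h x = f x \<and> h y = f y"
      using interp[OF f c, of x y] by blast
  qed
  then obtain H where H: "\<forall>y. H y \<in> A \<and> L (H y) \<le> c \<and> H y x = f x \<and> H y y = f y"
    using choice[of "\<lambda>y h. h \<in> A \<and> L h \<le> c \<and> h x = f x \<and> h y = f y"] by blast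
  have HA: "H y \<in> A" for y using H by blast
  have fc: "continuous_on UNIV f" using A_cont f by blast
  have op: "open {z. H y z < f z + \<delta>}" if "y \<in> UNIV" for y
  proof (rule open_Collect_less)
    show "continuous_on UNIV (H y)" using A_cont HA by blast
    show "continuous_on UNIV (\<lambda>z. f z + \<delta>)" using fc by (intro continuous_intros)
  qed
  have cov: "UNIV \<subseteq> (\<Union>y\<in>UNIV. {z. H y z < f z + \<delta>})"
  proof
    fix z :: 'a
    have "H z z = f z" using H by blast
    then have "z \<in> {w. H z w < f w + \<delta>}" using d by simp
    then show "z \<in> (\<Union>y\<in>UNIV. {z. H y z < f z + \<delta>})" by blast
  qed
  obtain I where I: "finite I" "UNIV \<subseteq> (\<Union>y\<in>I. {z. H y z < f z + \<delta>})"
    by (rule compactE_image[OF compact_X op cov]) blast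
  then have Ine: "I \<noteq> {}" by blast
  have "\<forall>i\<in>I. H i \<in> A \<and> L (H i) \<le> c" using H by blast
  then obtain k where k: "k \<in> A" "L k \<le> c" "\<forall>z. k z = Min ((\<lambda>i. H i z) ` I)"
    using fin_min[OF I(1) Ine, of H c] by blast
  have "(\<lambda>i. H i x) ` I = {f x}" using H Ine by auto
  then have "k x = f x" using k(3) by simp
  moreover have "k z < f z + \<delta>" for z
  proof -
    obtain y where y: "y \<in> I" "H y z < f z + \<delta>" using I(2) by blast
    have "k z \<le> H y z" using k(3) I(1) y(1) by simp
    then show ?thesis using y by linarith
  qed
  ultimately show ?thesis using k by blast
qed

lemma step3:
  assumes f: "f \<in> A" and c: "lip_seminorm (\<lambda>x y. rhoL A L (delta x) (delta y)) f < c" and d: "\<delta> > 0"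
  shows "\<exists>k\<in>A. L k \<le> c \<and> (\<forall>z. \<bar>k z - f z\<bar> < \<delta>)"
proof -
  have "\<forall>x. \<exists>h. h \<in> A \<and> L h \<le> c \<and> h x = f x \<and> (\<forall>z. h z < f z + \<delta>)"
  proof
    fix x show "\<exists>h. h \<in> A \<and> L h \<le> c \<and> h x = f x \<and> (\<forall>z. h z < f z + \<delta>)"
      using step2[OF f c d, of x] by blast
  qed
  then obtain H where H: "\<forall>x. H x \<in> A \<and> L (H x) \<le> c \<and> H x x = f x \<and> (\<forall>z. H x z < f z + \<delta>)"
    using choice[of "\<lambda>x h. h \<in> A \<and> L h \<le> c \<and> h x = f x \<and> (\<forall>z. h z < f z + \<delta>)"] by blast
  have HA: "H y \<in> A" for y using H by blast
  have fc: "continuous_on UNIV f" using A_cont f by blast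
  have op: "open {z. f z - \<delta> < H y z}" if "y \<in> UNIV" for y
  proof (rule open_Collect_less)
    show "continuous_on UNIV (H y)" using A_cont HA by blast
    show "continuous_on UNIV (\<lambda>z. f z - \<delta>)" using fc by (intro continuous_intros)
  qed
  have cov: "UNIV \<subseteq> (\<Union>y\<in>UNIV. {z. f z - \<delta> < H y z})"
  proof
    fix z :: 'a
    have "H z z = f z" using H by blast
    then have "z \<in> {w. f w - \<delta> < H z w}" using d by simp
    then show "z \<in> (\<Union>y\<in>UNIV. {z. f z - \<delta> < H y z})" by blast
  qed
  obtain I where I: "finite I" "UNIV \<subseteq> (\<Union>y\<in>I. {z. f z - \<delta> < H y z})"
    by (rule compactE_image[OF compact_X op cov]) blast
  then have Ine: "I \<noteq> {}" by blast
  have "\<forall>i\<in>I. H i \<in> A \<and> L (H i) \<le> c" using H by blast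
  then obtain k where k: "k \<in> A" "L k \<le> c" "\<forall>z. k z = Max ((\<lambda>i. H i z) ` I)"
    using fin_max[OF I(1) Ine, of H c] by blast
  have "\<bar>k z - f z\<bar> < \<delta>" for z
  proof -
    obtain y where y: "y \<in> I" "f z - \<delta> < H y z" using I(2) by blast
    have "H y z \<le> k z" using k(3) I(1) y(1) by simp
    moreover have "k z \<in> (\<lambda>i. H i z) ` I" unfolding k(3)[rule_format]
      by (rule Max_in) (use I(1) Ine in auto)
    then obtain i where ki: "k z = H i z" by blast
    have "\<forall>z. H i z < f z + \<delta>" using H by blast
    then have "k z < f z + \<delta>" by (simp add: ki)
    ultimately show ?thesis using y by linarith
  qed
  then show ?thesis using k by blast
qed

lemma main_le:
  assumes f: "f \<in> A"
  shows "L f \<le> lip_seminorm (\<lambda>x y. rhoL A L (delta x) (delta y)) f"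
proof (rule dense_ge)
  fix c assume c: "lip_seminorm (\<lambda>x y. rhoL A L (delta x) (delta y)) f < c"
  then have cpos: "c > 0" using M_nonneg[OF f] by linarith
  define f' where "f' = (\<lambda>z. (1/c) * f z)"
  have f'A: "f' \<in> A" using A_scale f f'_def by blast
  have "L f' \<le> 1"
  proof (rule L_closed[OF f'A], intro allI impI)
    fix e :: real assume e: "e > 0"
    obtain k where k: "k \<in> A" "L k \<le> c" "\<forall>z. \<bar>k z - f z\<bar> < e * c / 2"
      using step3[OF f c, of "e * c / 2"] e cpos by auto
    define g where "g = (\<lambda>z. (1/c) * k z)"
    have "g \<in> A" using A_scale k g_def by blast
    moreover have "L g \<le> 1" using L_scale[OF k(1), of "1/c"] k(2) cpos g_def by simp
    moreover have "supnorm (\<lambda>x. f' x - g x) \<le> e / 2"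
      unfolding supnorm_def
    proof (rule cSUP_least)
      fix z
      have "\<bar>f' z - g z\<bar> = \<bar>k z - f z\<bar> / c" using cpos unfolding f'_def g_def
        by (simp add: diff_divide_distrib[symmetric] abs_minus_commute)
      also have "\<dots> \<le> e / 2" using k(3) cpos by (simp add: divide_le_eq less_imp_le)
      finally show "\<bar>f' z - g z\<bar> \<le> e / 2" .
    qed auto
    ultimately show "\<exists>g\<in>A. L g \<le> 1 \<and> supnorm (\<lambda>x. f' x - g x) < e" using e by force
  qed
  moreover have "L f = c * L f'"
  proof -
    have "f = (\<lambda>z. c * f' z)" using cpos unfolding f'_def by auto
    then show ?thesis using L_scale[OF f'A, of c] cpos by simp
  qed
  ultimately show "L f \<le> c" using cpos by (simp add: mult_le_cancel_left1)
qed

end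

theorem corollary8p3:
  fixes A :: "('a::t2_space \<Rightarrow> real) set" and L :: "('a \<Rightarrow> real) \<Rightarrow> real"
  assumes compact_X: "compact (UNIV :: 'a set)"
    and A_cont: "\<forall>f\<in>A. continuous_on UNIV f"
    and A_add: "\<forall>f\<in>A. \<forall>g\<in>A. (\<lambda>x. f x + g x) \<in> A"
    and A_scale: "\<forall>f\<in>A. \<forall>c::real. (\<lambda>x. c * f x) \<in> A"
    and A_const: "\<forall>c::real. (\<lambda>x. c) \<in> A"
    and A_max: "\<forall>f\<in>A. \<forall>g\<in>A. (\<lambda>x. max (f x) (g x)) \<in> A"
    and A_min: "\<forall>f\<in>A. \<forall>g\<in>A. (\<lambda>x. min (f x) (g x)) \<in> A"
    and A_dense: "\<forall>h. continuous_on UNIV h \<longrightarrow>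
                    (\<forall>e>0. \<exists>f\<in>A. supnorm (\<lambda>x. f x - h x) < e)"
    and L_lip: "lip_norm A L"
    and L_max: "\<forall>f\<in>A. \<forall>g\<in>A. L (\<lambda>x. max (f x) (g x)) \<le> max (L f) (L g)"
  shows "\<forall>f\<in>A. L f = lip_seminorm (\<lambda>x y. rhoL A L (delta x) (delta y)) f"
proof -
  interpret lctx A L
    by (rule lctx.intro) (fact compact_X A_cont A_add A_scale A_const A_max L_lip L_max)+
  show ?thesis
  proof
    fix f assume f: "f \<in> A"
    show "L f = lip_seminorm (\<lambda>x y. rhoL A L (delta x) (delta y)) f"
      using lip_le_L[OF f] main_le[OF f] by linarith
  qed
qed

end
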